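(* Let $\mathcal{G}$ be a $p$-periodic graph on $V$ with arena $\mathcal{D}$, and suppose $\mathcal{G}$ is reflexive and temporally connected. If some augmented arena $\mathcal{A}$ of $\mathcal{D}$ contains a star, then every temporal node of $\mathcal{A}^*$ is an anchored star in $\mathcal{A}^*$, i.e., $\Gamma_t(u,\mathcal{A}^* )=V$ and $(t,u)$ is anchored for all $t\in\mathbb{Z}_p$, $u\in V$.
   Context: Let $V$ be a finite set and $p\ge 1$ an integer; $[t]_p$ denotes $t \bmod p$. A $p$-periodic graph $\mathcal{G}=(G_0,\dots,G_{p-1})^*$ is the infinite sequence of directed graphs $G_t=(V,E_{[t]_p})$, $t=0,1,\dots$, where $E_0,\dots,E_{p-1}\subseteq V\times V$ (self-loops allowed), each $G_i$ sinkless. $\mathcal{G}$ is reflexive if $(u,u)\in E_i$ for all $u\in V$, $i\in\mathbb{Z}_p$. $\mathcal{G}$ is temporally connected if for all $u,v\in V$ and every time $t\ge 0$ there is a journey from $u$ to $v$ starting at time $t$: a sequence $z_0=u,z_1,\dots,z_k=v$ with $(z_j,z_{j+1})\in E_{[t+j]_p}$ for $0\le j<k$. An arena on $V$ of length $p$ is a directed graph with vertex set $\mathbb{Z}_p\times V$ (temporal nodes) all of whose edges have the form $((i,w),([i+1]_p,w'))$. The arena of $\mathcal{G}$ is the arena $\mathcal{D}$ with $((i,u),([i+1]_p,v))\in E(\mathcal{D})$ iff $(u,v)\in E_i$. Write $\Gamma_t(u,\mathcal{M})=\{v : ((t,u),([t+1]_p,v))\in E(\mathcal{M})\}$. Game: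 first the cop, then the robber choose vertices. In each round $t$, with cop at $c$ and robber at $r$, the cop must move to some $c'\in\Gamma_{[t]_p}(c,\mathcal{D})$; if $c'=r$ the cop wins; otherwise the robber must move to some $r'\in\Gamma_{[t]_p}(r,\mathcal{D})$ and the next round starts. A configuration $(t,c,r)$ ($t\in\mathbb{Z}_p$) is the state at the start of a round with index $\equiv t\pmod p$, cop at $c$, robber at $r$, cop to move; it is copwin if from it the cop can force capture in finitely many rounds against every robber strategy. An augmented arena of $\mathcal{D}$ is an arena $\mathcal{A}$ with $E(\mathcal{D})\subseteq E(\mathcal{A})$ such that for every edge $((t,x),([t+1]_p,y))\in E(\mathcal{A})$ the configuration $(t,x,y)$ is copwin. $\mathcal{A}^*$ is the maximum augmented arena (edge set = union of edge sets of all augmented arenas). A temporal node $(t,u)$ is a star in an arena $\mathcal{A}$ if $\Gamma_t(u,\mathcal{A})=V$; it is anchored if there is a directed walk (possibly of length $0$) in $\mathcal{D}$ from some $(0,v)$ to $(t,u)$. *)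

theory Defs
  imports Main
begin

text \<open>A p-periodic graph on V is given by edge sets E 0, ..., E (p-1) (index i < p);
  graph at time t is E (t mod p). Temporal nodes are pairs (i, w) with i < p, w in V.\<close>

definition periodic_graph :: "'v set \<Rightarrow> nat \<Rightarrow> (nat \<Rightarrow> ('v \<times> 'v) set) \<Rightarrow> bool" where
  "periodic_graph V p E \<longleftrightarrow> finite V \<and> p \<ge> 1 \<and>
     (\<forall>i<p. E i \<subseteq> V \<times> V \<and> (\<forall>u\<in>V. \<exists>v. (u, v) \<in> E i))"

definition reflexive_pg :: "'v set \<Rightarrow> nat \<Rightarrow> (nat \<Rightarrow> ('v \<times> 'v) set) \<Rightarrow> bool" where
  "reflexive_pg V p E \<longleftrightarrow> (\<forall>i<p. \<forall>u\<in>V. (u, u) \<in> E i)"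

definition journey :: "nat \<Rightarrow> (nat \<Rightarrow> ('v \<times> 'v) set) \<Rightarrow> nat \<Rightarrow> 'v list \<Rightarrow> bool" where
  "journey p E t zs \<longleftrightarrow> zs \<noteq> [] \<and>
     (\<forall>j. Suc j < length zs \<longrightarrow> (zs ! j, zs ! Suc j) \<in> E ((t + j) mod p))"

definition temporally_connected :: "'v set \<Rightarrow> nat \<Rightarrow> (nat \<Rightarrow> ('v \<times> 'v) set) \<Rightarrow> bool" where
  "temporally_connected V p E \<longleftrightarrow>
     (\<forall>u\<in>V. \<forall>v\<in>V. \<forall>t::nat. \<exists>zs. journey p E t zs \<and> hd zs = u \<and> last zs = v)"

type_synonym 'v arena = "((nat \<times> 'v) \<times> (nat \<times> 'v)) set"

definition is_arena :: "'v set \<Rightarrow> nat \<Rightarrow> 'v arena \<Rightarrow> bool" where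
  "is_arena V p A \<longleftrightarrow>
     (\<forall>e\<in>A. \<exists>i w w'. i < p \<and> w \<in> V \<and> w' \<in> V \<and> e = ((i, w), ((i + 1) mod p, w')))"

definition arena_of :: "nat \<Rightarrow> (nat \<Rightarrow> ('v \<times> 'v) set) \<Rightarrow> 'v arena" where
  "arena_of p E = {((i, u), ((i + 1) mod p, v)) | i u v. i < p \<and> (u, v) \<in> E i}"

definition Gamma :: "nat \<Rightarrow> 'v arena \<Rightarrow> nat \<Rightarrow> 'v \<Rightarrow> 'v set" where
  "Gamma p M t u = {v. ((t, u), ((t + 1) mod p, v)) \<in> M}"

text \<open>Copwin configurations (t, c, r): the cop (to move) can force capture in finitely many
  rounds. Since the game is finite-state and finitely branching, this is the least set
  closed under the one-round rule (the cop attractor).\<close>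

inductive copwin :: "nat \<Rightarrow> (nat \<Rightarrow> ('v \<times> 'v) set) \<Rightarrow> nat \<Rightarrow> 'v \<Rightarrow> 'v \<Rightarrow> bool"
  for p E where
  step: "\<lbrakk> c' \<in> Gamma p (arena_of p E) t c;
          c' = r \<or> (\<forall>r' \<in> Gamma p (arena_of p E) t r. copwin p E ((t + 1) mod p) c' r') \<rbrakk>
         \<Longrightarrow> copwin p E t c r"

definition augmented_arena :: "'v set \<Rightarrow> nat \<Rightarrow> (nat \<Rightarrow> ('v \<times> 'v) set) \<Rightarrow> 'v arena \<Rightarrow> bool" where
  "augmented_arena V p E A \<longleftrightarrow> is_arena V p A \<and> arena_of p E \<subseteq> A \<and>
     (\<forall>t x t' y. ((t, x), (t', y)) \<in> A \<longrightarrow> copwin p E t x y)"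

definition max_augmented_arena :: "'v set \<Rightarrow> nat \<Rightarrow> (nat \<Rightarrow> ('v \<times> 'v) set) \<Rightarrow> 'v arena" where
  "max_augmented_arena V p E = \<Union> {A. augmented_arena V p E A}"

definition is_star :: "'v set \<Rightarrow> nat \<Rightarrow> 'v arena \<Rightarrow> nat \<Rightarrow> 'v \<Rightarrow> bool" where
  "is_star V p A t u \<longleftrightarrow> Gamma p A t u = V"

definition anchored :: "'v set \<Rightarrow> nat \<Rightarrow> (nat \<Rightarrow> ('v \<times> 'v) set) \<Rightarrow> nat \<Rightarrow> 'v \<Rightarrow> bool" where
  "anchored V p E t u \<longleftrightarrow> (\<exists>v\<in>V. ((0, v), (t, u)) \<in> (arena_of p E)\<^sup>*)"

end

theory Submission
  imports Defs
begin

lemma edge_in: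
  "i < p \<Longrightarrow> (u, v) \<in> E i \<Longrightarrow> ((i, u), ((i + 1) mod p, v)) \<in> arena_of p E"
  by (auto simp: arena_of_def)

lemma journey_path:
  assumes "p \<ge> 1" "journey p E t zs"
  shows "((t mod p, hd zs), ((t + length zs - 1) mod p, last zs)) \<in> (arena_of p E)\<^sup>*"
  using assms(2)
proof (induction zs arbitrary: t)
  case Nil
  then show ?case by (simp add: journey_def)
next
  case (Cons a zs)
  show ?case
  proof (cases zs)
    case Nil
    then show ?thesis by simp
  next
    case (Cons b zs')
    have j: "journey p E (Suc t) zs"
      unfolding journey_def
    proof (intro conjI allI impI)
      show "zs \<noteq> []" using Cons by simp
      fix j assume "Suc j < length zs"
      then have "Suc (Suc j) < length (a # zs)" by simp
      then have "((a # zs) ! Suc j, (a # zs) ! Suc (Suc j)) \<in> E ((t + Suc j) mod p)"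
        using Cons.prems unfolding journey_def by blast
      then show "(zs ! j, zs ! Suc j) \<in> E ((Suc t + j) mod p)" by simp
    qed
    have e: "(a, b) \<in> E (t mod p)"
      using Cons.prems unfolding journey_def by (auto simp: Cons)
    have "((t mod p, a), ((t mod p + 1) mod p, b)) \<in> arena_of p E"
      using edge_in[of "t mod p" p a b E] e assms(1) by simp
    moreover have "(t mod p + 1) mod p = Suc t mod p" by (simp add: mod_Suc_eq)
    moreover have "((Suc t mod p, b), ((Suc t + length zs - 1) mod p, last zs)) \<in> (arena_of p E)\<^sup>*"
      using Cons.IH[OF j] by (simp add: Cons)
    ultimately show ?thesis using Cons
      by (auto intro: converse_rtrancl_into_rtrancl)
  qed
qed

lemma wait_path:
  assumes "p \<ge> 1" "reflexive_pg V p E" "u \<in> V" "s < p"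
  shows "((s, u), ((s + m) mod p, u)) \<in> (arena_of p E)\<^sup>*"
proof (induction m)
  case 0
  then show ?case using assms by simp
next
  case (Suc m)
  have "(u, u) \<in> E ((s + m) mod p)" using assms(1-3) unfolding reflexive_pg_def by simp
  then have "(((s + m) mod p, u), (((s + m) mod p + 1) mod p, u)) \<in> arena_of p E"
    using edge_in assms(1) by (metis One_nat_def Suc_le_eq mod_less_divisor)
  moreover have "((s + m) mod p + 1) mod p = (s + Suc m) mod p" by (simp add: mod_Suc_eq)
  ultimately show ?case using Suc by (auto intro: rtrancl_into_rtrancl)
qed

lemma wait_path2:
  assumes "p \<ge> 1" "reflexive_pg V p E" "u \<in> V" "s < p" "s' < p"
  shows "((s, u), (s', u)) \<in> (arena_of p E)\<^sup>*"
proof -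
  have "(s + (s' + p - s)) mod p = s'" using assms by simp
  then show ?thesis using wait_path[OF assms(1-4), of "s' + p - s"] by simp
qed

lemma copwin_reach:
  assumes pg: "periodic_graph V p E"
    and goal: "\<forall>r\<in>V. copwin p E t0 u0 r"
    and path: "((t, c), (t0, u0)) \<in> (arena_of p E)\<^sup>*"
  shows "\<forall>r\<in>V. copwin p E t c r"
  using path
proof (induction "(t, c)" arbitrary: t c rule: converse_rtrancl_induct)
  case base
  then show ?case using goal by simp
next
  case (step z t c)
  obtain t1 c1 where z: "z = (t1, c1)" by (cases z)
  from step.hyps(1) z have tp: "t < p" and t1: "t1 = (t + 1) mod p" and ec: "(c, c1) \<in> E t"
    by (auto simp: arena_of_def)
  have IH: "\<forall>r\<in>V. copwin p E t1 c1 r" using step.hyps(3) z by simp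
  show ?case
  proof
    fix r assume rV: "r \<in> V"
    have g: "c1 \<in> Gamma p (arena_of p E) t c" using step.hyps(1) z t1 by (simp add: Gamma_def)
    have "\<forall>r' \<in> Gamma p (arena_of p E) t r. copwin p E ((t + 1) mod p) c1 r'"
    proof
      fix r' assume "r' \<in> Gamma p (arena_of p E) t r"
      then have "(r, r') \<in> E t" by (auto simp: Gamma_def arena_of_def)
      then have "r' \<in> V" using pg tp unfolding periodic_graph_def by blast
      then show "copwin p E ((t + 1) mod p) c1 r'" using IH t1 by simp
    qed
    then show "copwin p E t c r" using g by (intro copwin.step) auto
  qed
qed

theorem mainTheorem8:
  fixes V :: "'v set" and p :: nat and E :: "nat \<Rightarrow> ('v \<times> 'v) set" and A :: "'v arena"
  assumes "periodic_graph V p E"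
    and "reflexive_pg V p E"
    and "temporally_connected V p E"
    and "augmented_arena V p E A"
    and "\<exists>t<p. \<exists>u\<in>V. is_star V p A t u"
  shows "\<forall>t<p. \<forall>u\<in>V. is_star V p (max_augmented_arena V p E) t u \<and> anchored V p E t u"
proof -
  have p1: "p \<ge> 1" using assms(1) unfolding periodic_graph_def by simp
  obtain t0 u0 where t0: "t0 < p" and u0: "u0 \<in> V" and st: "is_star V p A t0 u0"
    using assms(5) by blast
  have goal: "\<forall>r\<in>V. copwin p E t0 u0 r"
  proof
    fix r assume "r \<in> V"
    then have "((t0, u0), ((t0 + 1) mod p, r)) \<in> A" using st by (auto simp: is_star_def Gamma_def)
    then show "copwin p E t0 u0 r" using assms(4) unfolding augmented_arena_def by blast
  qed
  have allcw: "copwin p E t c r" if tpx: "t < p" and cVx: "c \<in> V" and rVx: "r \<in> V" for t c r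
  proof -
    obtain zs where zs: "journey p E t zs" "hd zs = c" "last zs = u0"
      using assms(3) cVx u0 unfolding temporally_connected_def by meson
    have "((t, c), ((t + length zs - 1) mod p, u0)) \<in> (arena_of p E)\<^sup>*"
      using journey_path[OF p1 zs(1)] zs tpx by simp
    moreover have "(((t + length zs - 1) mod p, u0), (t0, u0)) \<in> (arena_of p E)\<^sup>*"
      using wait_path2[OF p1 assms(2) u0 _ t0] p1 by simp
    ultimately have "((t, c), (t0, u0)) \<in> (arena_of p E)\<^sup>*" by (rule rtrancl_trans)
    then show ?thesis using copwin_reach[OF assms(1) goal] rVx by blast
  qed
  define F where "F = {((t, u), ((t + 1) mod p, v)) | t u v. t < p \<and> u \<in> V \<and> v \<in> V}"
  have augF: "augmented_arena V p E F"
    unfolding augmented_arena_def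
  proof (intro conjI allI impI)
    show "is_arena V p F" unfolding is_arena_def F_def by blast
    show "arena_of p E \<subseteq> F"
      using assms(1) unfolding arena_of_def F_def periodic_graph_def by blast
    fix t x t' y assume "((t, x), (t', y)) \<in> F"
    then show "copwin p E t x y" using allcw unfolding F_def by blast
  qed
  show ?thesis
  proof (intro allI impI ballI conjI)
    fix t u assume tp: "t < p" and uV: "u \<in> V"
    show "is_star V p (max_augmented_arena V p E) t u"
      unfolding is_star_def Gamma_def
    proof (rule set_eqI, rule iffI)
      fix v assume "v \<in> {v. ((t, u), ((t + 1) mod p, v)) \<in> max_augmented_arena V p E}"
      then obtain B where "augmented_arena V p E B" "((t, u), ((t + 1) mod p, v)) \<in> B"
        by (auto simp: max_augmented_arena_def)
      then show "v \<in> V" unfolding augmented_arena_def is_arena_def by blast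
    next
      fix v assume "v \<in> V"
      then have "((t, u), ((t + 1) mod p, v)) \<in> F" using tp uV unfolding F_def by blast
      then show "v \<in> {v. ((t, u), ((t + 1) mod p, v)) \<in> max_augmented_arena V p E}"
        using augF by (auto simp: max_augmented_arena_def)
    qed
    show "anchored V p E t u"
      unfolding anchored_def using wait_path2[OF p1 assms(2) uV _ tp] p1 uV by auto
  qed
qed

end
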